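(* Let $\beta>0$ and $0<k<\frac{3}{3+\beta}$. Let \[f_{+-}(x,y,z)=\beta(x^2y^2+y^2z^2+x^2z^2)+\Big(x^2+y^2+z^2-\tfrac12\Big)^2-\tfrac{1-k}{4}.\] Then the zero set $Q^{+-}(k)=\{(x,y,z)\in\mathbb{R}^3: f_{+-}(x,y,z)=0\}$ is the disjoint union of two embedded compact connected components, each invariant under the octahedral group $O_h$ and each homeomorphic to a sphere.
   Context: $O_h$ denotes the octahedral group of order 48, i.e. the group of all $3\times 3$ signed permutation matrices acting on $\mathbb{R}^3$; $f_{+-}$ is $O_h$-invariant. *)

theory Defs
  imports "HOL-Analysis.Analysis"
begin

definition f_pm :: "real \<Rightarrow> real \<Rightarrow> real^3 \<Rightarrow> real" where
  "f_pm \<beta> k v = (let x = v$1; y = v$2; z = v$3 in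
      \<beta> * (x^2 * y^2 + y^2 * z^2 + x^2 * z^2) + (x^2 + y^2 + z^2 - 1/2)^2 - (1 - k) / 4)"

definition Q_pm :: "real \<Rightarrow> real \<Rightarrow> (real^3) set" where
  "Q_pm \<beta> k = {v. f_pm \<beta> k v = 0}"

definition O_h :: "(real^3^3) set" where
  "O_h = {M. \<exists>p s. p permutes (UNIV :: 3 set) \<and> (\<forall>i. s i \<in> {-1, 1::real}) \<and>
                  M = (\<chi> i j. if j = p i then s i else 0)}"

end

theory Submission
  imports Defs
begin

definition NN :: "real^3 \<Rightarrow> real" where "NN v = (\<Sum>i\<in>UNIV. (v$i)^2)"
definition PP :: "real^3 \<Rightarrow> real" where "PP v = (\<Sum>i\<in>UNIV. (v$i)^4)"
definition SS :: "real^3 \<Rightarrow> real" where "SS v = (NN v ^ 2 - PP v) / 2"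

lemma f_alt: "f_pm \<beta> k v = \<beta> * SS v + NN v ^ 2 - NN v + k / 4"
  unfolding f_pm_def SS_def NN_def PP_def sum_3 Let_def
  by (simp add: power2_eq_square power4_eq_xxxx algebra_simps divide_simps)

lemma NN_norm: "NN v = norm v ^ 2"
  unfolding NN_def power2_norm_eq_inner inner_vec_def by (simp add: power2_eq_square)

lemma NN_scale: "NN (c *\<^sub>R v) = c^2 * NN v"
  unfolding NN_def by (simp add: sum_distrib_left power_mult_distrib)
lemma PP_scale: "PP (c *\<^sub>R v) = c^4 * PP v"
  unfolding PP_def by (simp add: sum_distrib_left power_mult_distrib)
lemma SS_scale: "SS (c *\<^sub>R v) = c^4 * SS v"
  unfolding SS_def NN_scale PP_scale by (simp add: algebra_simps power_mult_distrib flip: power_mult)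

lemma SS_expl: "SS v = (v$1)^2*(v$2)^2 + (v$2)^2*(v$3)^2 + (v$1)^2*(v$3)^2"
  unfolding SS_def NN_def PP_def sum_3
  by (simp add: power2_eq_square power4_eq_xxxx algebra_simps)

lemma SS_nonneg: "0 \<le> SS v"
  unfolding SS_expl by simp

lemma SS_le: "3 * SS v \<le> NN v ^ 2"
proof -
  have "3*(a*b + b*c + a*c) \<le> (a+b+c)^2" for a b c :: real
  proof -
    have "0 \<le> (a-b)^2 + (b-c)^2 + (a-c)^2" by simp
    thus ?thesis by (simp add: power2_eq_square algebra_simps)
  qed
  thus ?thesis unfolding SS_expl NN_def sum_3 by simp
qed

lemma Oh_apply:
  assumes "M \<in> O_h"
  obtains p s where "p permutes (UNIV::3 set)" "\<forall>i. s i \<in> {-1,1::real}"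
    "\<And>v i. (M *v v)$i = s i * v$(p i)"
proof -
  obtain p s where ps: "p permutes (UNIV :: 3 set)" "\<forall>i. s i \<in> {-1, 1::real}"
    "M = (\<chi> i j. if j = p i then s i else 0)"
    using assms unfolding O_h_def by blast
  have "(M *v v)$i = s i * v$(p i)" for v i
  proof -
    have e: "(if P then a else 0) * b = (if P then a * b else 0)" for P and a b :: real by simp
    show ?thesis unfolding ps(3) matrix_vector_mult_def by (simp add: e sum.delta')
  qed
  thus ?thesis using that ps by blast
qed

lemma sq_s: "s \<in> {-1,1::real} \<Longrightarrow> s^2 = 1" by auto

lemma Oh_inv:
  assumes "M \<in> O_h"
  shows "NN (M *v v) = NN v" "PP (M *v v) = PP v" "\<exists>u. w = M *v u"
proof -
  obtain p s where ps: "p permutes (UNIV::3 set)" "\<forall>i. s i \<in> {-1,1::real}"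
    "\<And>v i. (M *v v)$i = s i * v$(p i)" using Oh_apply[OF assms] by metis
  have s2: "(s i)^2 = 1" for i using sq_s ps(2) by blast
  have "NN (M *v v) = (\<Sum>i\<in>UNIV. (v$(p i))^2)"
    unfolding NN_def ps(3) by (simp add: power_mult_distrib s2)
  also have "\<dots> = NN v" unfolding NN_def using sum.permute[OF ps(1), of "\<lambda>i. (v$i)^2"]
    by (simp add: o_def)
  finally show "NN (M *v v) = NN v" .
  have s4: "(s i)^4 = 1" for i using s2[of i] by (metis power2_eq_square power_one numeral_Bit0 power_add)
  have "PP (M *v v) = (\<Sum>i\<in>UNIV. (v$(p i))^4)"
    unfolding PP_def ps(3) by (simp add: power_mult_distrib s4)
  also have "\<dots> = PP v" unfolding PP_def using sum.permute[OF ps(1), of "\<lambda>i. (v$i)^4"]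
    by (simp add: o_def)
  finally show "PP (M *v v) = PP v" .
  let ?u = "\<chi> j. s (inv p j) * w$(inv p j)"
  have "w = M *v ?u"
    unfolding vec_eq_iff ps(3) by (simp add: permutes_inverses[OF ps(1)] mult.assoc[symmetric] s2 flip: power2_eq_square)
  thus "\<exists>u. w = M *v u" ..
qed

lemma Oh_set_inv:
  assumes "M \<in> O_h"
  shows "(\<lambda>v. M *v v) ` {v. G (NN v) (PP v)} = {v. G (NN v) (PP v)}"
proof
  show "(\<lambda>v. M *v v) ` {v. G (NN v) (PP v)} \<subseteq> {v. G (NN v) (PP v)}"
    using Oh_inv[OF assms] by auto
  show "{v. G (NN v) (PP v)} \<subseteq> (\<lambda>v. M *v v) ` {v. G (NN v) (PP v)}"
  proof
    fix w assume w: "w \<in> {v. G (NN v) (PP v)}"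
    obtain u where u: "w = M *v u" using Oh_inv(3)[OF assms] by blast
    then have "u \<in> {v. G (NN v) (PP v)}" using w Oh_inv[OF assms, of u] by simp
    thus "w \<in> (\<lambda>v. M *v v) ` {v. G (NN v) (PP v)}" using u by blast
  qed
qed

definition XX :: "real \<Rightarrow> real \<Rightarrow> real \<Rightarrow> (real^3) set" where
  "XX \<beta> k \<epsilon> = {v. f_pm \<beta> k v = 0 \<and> \<epsilon> * (2*(NN v^2 + \<beta>*SS v) - NN v) < 0}"

lemma Q_not0: assumes "0 < k" "f_pm \<beta> k v = 0" shows "v \<noteq> 0"
proof
  assume "v = 0"
  then have "NN v = 0" "SS v = 0" by (simp_all add: NN_def SS_def PP_def)
  thus False using assms by (simp add: f_alt)
qed

lemma Q_bound: assumes "0 < \<beta>" "0 < k" "f_pm \<beta> k v = 0" shows "NN v \<le> 1"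
proof -
  have "0 \<le> \<beta> * SS v" using assms(1) SS_nonneg[of v] by simp
  then have le: "NN v ^ 2 \<le> NN v" using assms(2,3) unfolding f_alt by linarith
  show ?thesis
  proof (rule ccontr)
    assume "\<not> NN v \<le> 1"
    then have "NN v * 1 < NN v * NN v" by (intro mult_strict_left_mono) auto
    thus False using le by (simp add: power2_eq_square)
  qed
qed

lemma Q_noteq:
  assumes "0 < \<beta>" "0 < k" "k < 3 / (3 + \<beta>)" "f_pm \<beta> k v = 0"
  shows "2*(NN v^2 + \<beta>*SS v) \<noteq> NN v"
proof
  assume h: "2*(NN v^2 + \<beta>*SS v) = NN v"
  have f: "\<beta> * SS v + NN v ^ 2 - NN v + k / 4 = 0" using assms(4) f_alt by simp
  have h': "2*NN v^2 + 2*(\<beta>*SS v) = NN v" using h by simp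
  have N: "NN v = k/2" using h' f by linarith
  have "\<beta> * SS v = k/4 - k^2/4" using f N by (simp add: power2_eq_square field_simps)
  moreover have "3 * (\<beta> * SS v) \<le> \<beta> * NN v ^ 2"
    using mult_left_mono[OF SS_le[of v], of \<beta>] assms(1) by (simp add: algebra_simps)
  ultimately have "3*(k/4 - k^2/4) \<le> \<beta> * (k^2/4)" using N by (simp add: power2_eq_square)
  hence "k * (3 - 3*k - \<beta> * k) \<le> 0" by (simp add: power2_eq_square algebra_simps)
  hence "3 - 3*k \<le> \<beta> * k" using assms(2) by (simp add: mult_le_0_iff)
  moreover have "k * (3 + \<beta>) < 3" using assms(1,3) by (simp add: field_simps)
  ultimately show False by (simp add: algebra_simps)
qed

lemma Q_split:
  assumes "0 < \<beta>" "0 < k" "k < 3 / (3 + \<beta>)"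
  shows "Q_pm \<beta> k = XX \<beta> k 1 \<union> XX \<beta> k (-1)" "XX \<beta> k 1 \<inter> XX \<beta> k (-1) = {}"
  using Q_noteq[OF assms] unfolding Q_pm_def XX_def by force+

lemma XX_closed_form:
  assumes "0 < \<beta>" "0 < k" "k < 3 / (3 + \<beta>)" "\<epsilon> \<in> {1,-1}"
  shows "XX \<beta> k \<epsilon> = {v. f_pm \<beta> k v = 0 \<and> \<epsilon> * (2*(NN v^2 + \<beta>*SS v) - NN v) \<le> 0}"
  using Q_noteq[OF assms(1-3)] assms(4) unfolding XX_def by force

lemma cont_NN: "continuous_on UNIV NN"
  unfolding NN_def sum_3 by (intro continuous_intros)
lemma cont_SS: "continuous_on UNIV SS"
  unfolding SS_expl by (intro continuous_intros)
lemma cont_f: "continuous_on UNIV (f_pm \<beta> k)"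
  unfolding f_alt[abs_def] by (intro continuous_intros cont_NN cont_SS)

lemma XX_compact:
  assumes "0 < \<beta>" "0 < k" "k < 3 / (3 + \<beta>)" "\<epsilon> \<in> {1,-1}"
  shows "compact (XX \<beta> k \<epsilon>)"
  unfolding compact_eq_bounded_closed
proof
  show "closed (XX \<beta> k \<epsilon>)" unfolding XX_closed_form[OF assms]
  proof (rule closed_Collect_conj)
    show "closed {v. f_pm \<beta> k v = 0}"
      by (rule closed_Collect_eq[OF cont_f continuous_on_const])
    have c: "continuous_on UNIV (\<lambda>v. \<epsilon> * (2 * ((NN v)\<^sup>2 + \<beta> * SS v) - NN v))"
      by (intro continuous_intros cont_NN cont_SS)
    show "closed {v. \<epsilon> * (2 * ((NN v)\<^sup>2 + \<beta> * SS v) - NN v) \<le> 0}"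
      by (rule closed_Collect_le[OF c continuous_on_const])
  qed
  show "bounded (XX \<beta> k \<epsilon>)" unfolding bounded_iff
  proof (intro exI ballI)
    fix v assume "v \<in> XX \<beta> k \<epsilon>"
    then have "NN v \<le> 1" using Q_bound assms unfolding XX_def by blast
    thus "norm v \<le> 1" unfolding NN_norm by (simp add: power_le_one_iff)
  qed
qed

lemma quad_root:
  fixes a k \<epsilon> d :: real
  assumes "\<epsilon>^2 = 1" "d^2 = 1 - k*a" "a > 0"
  shows "a * ((1 - \<epsilon>*d)/(2*a))^2 - (1 - \<epsilon>*d)/(2*a) + k/4 = 0"
proof -
  have "4*a*(a * ((1 - \<epsilon>*d)/(2*a))^2 - (1 - \<epsilon>*d)/(2*a) + k/4)
        = (1 - \<epsilon>*d)^2 - 2*(1 - \<epsilon>*d) + k*a"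
    using assms(3) by (simp add: field_simps power2_eq_square)
  also have "\<dots> = \<epsilon>^2 * d^2 - 1 + k*a" by (simp add: power2_eq_square algebra_simps)
  also have "\<dots> = 0" using assms(1,2) by simp
  finally show ?thesis using assms(3) by simp
qed

lemma XX_surj:
  assumes "0 < \<beta>" "0 < k" "k < 3 / (3 + \<beta>)" "\<epsilon> \<in> {1,-1}" "norm u = 1"
  shows "\<exists>v\<in>XX \<beta> k \<epsilon>. (1 / norm v) *\<^sub>R v = u"
proof -
  have e2: "\<epsilon>^2 = 1" using assms(4) by auto
  have Nu: "NN u = 1" using assms(5) by (simp add: NN_norm)
  define \<sigma> where "\<sigma> = SS u"
  define a where "a = 1 + \<beta> * \<sigma>"
  have s0: "0 \<le> \<sigma>" unfolding \<sigma>_def by (rule SS_nonneg)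
  have s1: "3 * \<sigma> \<le> 1" using SS_le[of u] Nu unfolding \<sigma>_def by simp
  have a1: "1 \<le> a" unfolding a_def using s0 assms(1) by simp
  have "3 * (k*a) = k * (3 + \<beta> * (3*\<sigma>))" unfolding a_def by (simp add: algebra_simps)
  also have "\<dots> \<le> k * (3 + \<beta>)" using s1 assms(1,2) by (intro mult_left_mono) auto
  also have "\<dots> < 3" using assms(1,3) by (simp add: field_simps)
  finally have ka1: "k * a < 1" by simp
  have ka0: "0 < k * a" using a1 assms(2) by simp
  define D where "D = 1 - k*a"
  define d where "d = sqrt D"
  have D0: "0 < D" "D < 1" unfolding D_def using ka1 ka0 by auto
  have d0: "0 < d" "d < 1" unfolding d_def using D0 by (auto simp: real_sqrt_lt_1_iff)
  have d2: "d^2 = 1 - k*a" unfolding d_def D_def using D0(1) D_def by simp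
  define \<rho> where "\<rho> = (1 - \<epsilon>*d)/(2*a)"
  have ed: "\<epsilon>*d \<le> d" using assms(4) d0 by auto
  have "0 < 1 - \<epsilon>*d" using ed d0 by linarith
  then have r0: "0 < \<rho>" unfolding \<rho>_def using a1 by (intro divide_pos_pos) auto
  have rq: "a * \<rho>^2 - \<rho> + k/4 = 0" unfolding \<rho>_def using quad_root[OF e2 d2] a1 by simp
  have r2: "2*a*\<rho> - 1 = - \<epsilon>*d" unfolding \<rho>_def using a1 by (simp add: field_simps)
  define v where "v = sqrt \<rho> *\<^sub>R u"
  have sq2: "sqrt \<rho> ^ 2 = \<rho>" using r0 by simp
  have sq4: "sqrt \<rho> ^ 4 = \<rho>^2" using sq2 by (metis power_mult numeral_times_numeral semiring_norm(12) power2_eq_square mult_2 numeral_Bit0)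
  have Nv: "NN v = \<rho>" unfolding v_def NN_scale Nu sq2 by simp
  have Sv: "SS v = \<rho>^2 * \<sigma>" unfolding v_def SS_scale sq4 \<sigma>_def ..
  have fv: "f_pm \<beta> k v = 0" unfolding f_alt Nv Sv using rq unfolding a_def
    by (simp add: algebra_simps)
  have "\<epsilon> * (2*(NN v^2 + \<beta>*SS v) - NN v) = \<epsilon> * \<rho> * (2*a*\<rho> - 1)"
    unfolding Nv Sv a_def by (simp add: algebra_simps power2_eq_square)
  also have "\<dots> = - (\<epsilon>^2) * \<rho> * d" unfolding r2 by (simp add: power2_eq_square)
  also have "\<dots> < 0" using e2 r0 d0 by simp
  finally have "v \<in> XX \<beta> k \<epsilon>" unfolding XX_def using fv by simp
  moreover have "(1 / norm v) *\<^sub>R v = u" unfolding v_def using r0 assms(5) by simp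
  ultimately show ?thesis by blast
qed

lemma XX_inj:
  assumes "0 < k" "\<epsilon> \<in> {1,-1}"
  shows "inj_on (\<lambda>v. (1 / norm v) *\<^sub>R v) (XX \<beta> k \<epsilon>)"
proof
  fix v w assume v: "v \<in> XX \<beta> k \<epsilon>" and w: "w \<in> XX \<beta> k \<epsilon>"
    and eq: "(1 / norm v) *\<^sub>R v = (1 / norm w) *\<^sub>R w"
  have v0: "v \<noteq> 0" and w0: "w \<noteq> 0" using v w Q_not0[OF assms(1)] unfolding XX_def by auto
  define c where "c = norm w / norm v"
  have c0: "0 < c" unfolding c_def using v0 w0 by simp
  have wc: "w = c *\<^sub>R v"
  proof -
    have "w = norm w *\<^sub>R ((1 / norm w) *\<^sub>R w)" using w0 by simp
    also have "\<dots> = norm w *\<^sub>R ((1 / norm v) *\<^sub>R v)" using eq by simp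
    finally show ?thesis unfolding c_def by (simp add: divide_inverse mult.commute)
  qed
  define n where "n = NN v"
  define q where "q = NN v ^ 2 + \<beta> * SS v"
  define t where "t = c^2"
  have t0: "0 < t" unfolding t_def using c0 by simp
  have Nw: "NN w = t * n" unfolding wc NN_scale t_def n_def ..
  have qw: "NN w ^ 2 + \<beta> * SS w = t^2 * q"
    unfolding wc NN_scale SS_scale t_def q_def by (simp add: algebra_simps power_mult_distrib flip: power_mult)
  have fv: "q - n + k/4 = 0" using v unfolding XX_def f_alt q_def n_def by simp
  have fw: "t^2*q - t*n + k/4 = 0" using w unfolding XX_def f_alt qw[symmetric] Nw[symmetric] by simp
  have cv: "\<epsilon> * (2*q - n) < 0" using v unfolding XX_def q_def n_def by simp
  have cw0: "\<epsilon> * (2*(t^2*q) - t*n) < 0" using w unfolding XX_def qw[symmetric] Nw[symmetric] by simp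
  have "\<epsilon> * (2*(t^2*q) - t*n) = t * (\<epsilon> * (2*t*q - n))" by (simp add: algebra_simps power2_eq_square)
  then have tE: "t * (\<epsilon> * (2*t*q - n)) < 0" using cw0 by argo
  have cw: "\<epsilon> * (2*t*q - n) < 0"
  proof (rule ccontr)
    assume "\<not> \<epsilon> * (2*t*q - n) < 0"
    then have "0 \<le> t * (\<epsilon> * (2*t*q - n))" using t0 by simp
    thus False using tE by simp
  qed
  have t1: "t = 1"
  proof (rule ccontr)
    assume nt: "t \<noteq> 1"
    have "(t - 1) * ((t + 1) * q - n) = 0" using fv fw by (simp add: algebra_simps power2_eq_square)
    then have n': "n = (t+1)*q" using nt by simp
    have "\<epsilon> * (2*q - n) + \<epsilon> * (2*t*q - n) = 0" unfolding n' by (simp add: algebra_simps)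
    thus False using cv cw by linarith
  qed
  then have "c = 1" unfolding t_def using c0 by (simp add: power2_eq_1_iff)
  thus "v = w" using wc by simp
qed

lemma XX_homeo:
  assumes "0 < \<beta>" "0 < k" "k < 3 / (3 + \<beta>)" "\<epsilon> \<in> {1,-1}"
  shows "XX \<beta> k \<epsilon> homeomorphic sphere (0::real^3) 1"
proof (rule homeomorphic_compact)
  show "compact (XX \<beta> k \<epsilon>)" by (rule XX_compact[OF assms])
  have nz: "\<forall>v\<in>XX \<beta> k \<epsilon>. norm v \<noteq> 0" using Q_not0[OF assms(2)] unfolding XX_def by auto
  show "continuous_on (XX \<beta> k \<epsilon>) (\<lambda>v. (1 / norm v) *\<^sub>R v)"
    using nz by (intro continuous_intros) auto
  show "(\<lambda>v. (1 / norm v) *\<^sub>R v) ` XX \<beta> k \<epsilon> = sphere 0 1"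
  proof
    show "(\<lambda>v. (1 / norm v) *\<^sub>R v) ` XX \<beta> k \<epsilon> \<subseteq> sphere 0 1" using nz by auto
    show "sphere 0 1 \<subseteq> (\<lambda>v. (1 / norm v) *\<^sub>R v) ` XX \<beta> k \<epsilon>"
      using XX_surj[OF assms] by (fastforce simp: image_iff)
  qed
  show "inj_on (\<lambda>v. (1 / norm v) *\<^sub>R v) (XX \<beta> k \<epsilon>)" by (rule XX_inj[OF assms(2,4)])
qed

lemma XX_ne:
  assumes "0 < \<beta>" "0 < k" "k < 3 / (3 + \<beta>)" "\<epsilon> \<in> {1,-1}"
  shows "XX \<beta> k \<epsilon> \<noteq> {}"
proof -
  obtain u :: "real^3" where "norm u = 1" using vector_choose_size[of 1] by auto
  thus ?thesis using XX_surj[OF assms] by blast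
qed

lemma XX_conn:
  assumes "0 < \<beta>" "0 < k" "k < 3 / (3 + \<beta>)" "\<epsilon> \<in> {1,-1}"
  shows "connected (XX \<beta> k \<epsilon>)"
  using homeomorphic_connectedness[OF XX_homeo[OF assms]] connected_sphere[of "0::real^3" 1]
  by simp

lemma XX_Oh:
  assumes "M \<in> O_h"
  shows "(\<lambda>v. M *v v) ` XX \<beta> k \<epsilon> = XX \<beta> k \<epsilon>"
proof -
  define G where "G = (\<lambda>n p. \<beta> * ((n^2 - p)/2) + n^2 - n + k/4 = 0 \<and>
          \<epsilon> * (2*(n^2 + \<beta>*((n^2 - p)/2)) - n) < (0::real))"
  have "XX \<beta> k \<epsilon> = {v. G (NN v) (PP v)}"
    unfolding XX_def f_alt SS_def G_def by simp
  then show ?thesis by (simp only: Oh_set_inv[OF assms])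
qed

lemma comp_eq:
  assumes "closed A" "closed B" "A \<inter> B = {}" "connected A" "a \<in> A"
  shows "connected_component_set (A \<union> B) a = A"
proof
  show "A \<subseteq> connected_component_set (A \<union> B) a"
    by (rule connected_component_maximal[OF assms(5,4)]) auto
  let ?C = "connected_component_set (A \<union> B) a"
  have "connected ?C" by simp
  moreover have "?C \<subseteq> A \<union> B" by (rule connected_component_subset)
  moreover have "a \<in> ?C" using assms(5) by simp
  ultimately have "A \<inter> ?C = {} \<or> B \<inter> ?C = {}"
    using assms(1-3) by (intro connected_closedD) auto
  then have "B \<inter> ?C = {}" using \<open>a \<in> ?C\<close> assms(5) by blast
  thus "?C \<subseteq> A" using \<open>?C \<subseteq> A \<union> B\<close> by blast
qed

theorem lemma3:
  fixes \<beta> k :: real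
  assumes "\<beta> > 0" and "0 < k" and "k < 3 / (3 + \<beta>)"
  shows "\<exists>A B. Q_pm \<beta> k = A \<union> B \<and> A \<inter> B = {} \<and>
           (\<exists>a \<in> Q_pm \<beta> k. A = connected_component_set (Q_pm \<beta> k) a) \<and>
           (\<exists>b \<in> Q_pm \<beta> k. B = connected_component_set (Q_pm \<beta> k) b) \<and>
           compact A \<and> compact B \<and> connected A \<and> connected B \<and>
           (\<forall>M \<in> O_h. (\<lambda>v. M *v v) ` A = A \<and> (\<lambda>v. M *v v) ` B = B) \<and>
           A homeomorphic (sphere (0 :: real^3) 1) \<and>
           B homeomorphic (sphere (0 :: real^3) 1)"
proof (intro exI conjI)
  let ?A = "XX \<beta> k 1" and ?B = "XX \<beta> k (-1)"
  have e1: "(1::real) \<in> {1,-1}" and e2: "(-1::real) \<in> {1,-1}" by auto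
  note sp = Q_split[OF assms]
  show QAB: "Q_pm \<beta> k = ?A \<union> ?B" "?A \<inter> ?B = {}" using sp by auto
  show cA: "compact ?A" "compact ?B" using XX_compact[OF assms e1] XX_compact[OF assms e2] by auto
  show nA: "connected ?A" "connected ?B" using XX_conn[OF assms e1] XX_conn[OF assms e2] by auto
  show "?A homeomorphic sphere (0::real^3) 1" "?B homeomorphic sphere (0::real^3) 1"
    using XX_homeo[OF assms e1] XX_homeo[OF assms e2] by auto
  show "\<forall>M\<in>O_h. (\<lambda>v. M *v v) ` ?A = ?A \<and> (\<lambda>v. M *v v) ` ?B = ?B"
    using XX_Oh by blast
  obtain a where a: "a \<in> ?A" using XX_ne[OF assms e1] by blast
  obtain b where b: "b \<in> ?B" using XX_ne[OF assms e2] by blast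
  have clA: "closed ?A" "closed ?B" using cA compact_imp_closed by auto
  show "\<exists>a\<in>Q_pm \<beta> k. ?A = connected_component_set (Q_pm \<beta> k) a"
    using comp_eq[OF clA QAB(2) nA(1) a] a QAB(1) by auto
  have "connected_component_set (?B \<union> ?A) b = ?B"
    using comp_eq[OF clA(2,1) _ nA(2) b] QAB(2) by (simp add: Int_commute)
  then show "\<exists>b\<in>Q_pm \<beta> k. ?B = connected_component_set (Q_pm \<beta> k) b"
    using b QAB(1) by (auto simp: Un_commute)
qed

end
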